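(* For every $n\ge9$ we have $\tilde b(TC_n)\le 2^{n/4}(2^{-1/2}+2^{-1/4})$.
   Context: The triangular cycle $TC_n$ is the graph with vertex set $[n]$ in which $i\ne j$ are adjacent iff $i-j\pmod n\in\{n-2,n-1,1,2\}$. $\mathrm{Ind}(G)$ is the independence complex of $G$ (including the empty face), and $\tilde b(G)=\sum_{i\ge-1}\dim_{\mathbb{K}}\widetilde H_i(\mathrm{Ind}(G);\mathbb{K})$ for a fixed field $\mathbb{K}$. *)

theory Defs
  imports Complex_Main "HOL-Library.Function_Algebras"
begin

definition Ind :: "'a set \<Rightarrow> ('a \<Rightarrow> 'a \<Rightarrow> bool) \<Rightarrow> 'a set set" where
  "Ind V E = {\<sigma>. \<sigma> \<subseteq> V \<and> (\<forall>u\<in>\<sigma>. \<forall>v\<in>\<sigma>. \<not> E u v)}"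

definition chain_scale :: "'k::field \<Rightarrow> ('a set \<Rightarrow> 'k) \<Rightarrow> ('a set \<Rightarrow> 'k)" where
  "chain_scale a c = (\<lambda>\<sigma>. a * c \<sigma>)"

text \<open>Simplicial k-chains with coefficients in the field 'k; index k is the
  number of vertices of a face (so k = 0 is the empty face, i.e. dimension -1,
  giving the augmented complex used for reduced homology).\<close>
definition chains :: "'k::field itself \<Rightarrow> 'a set set \<Rightarrow> nat \<Rightarrow> ('a set \<Rightarrow> 'k) set" where
  "chains _ \<Delta> k = {c. \<forall>\<sigma>. c \<sigma> \<noteq> 0 \<longrightarrow> \<sigma> \<in> \<Delta> \<and> card \<sigma> = k}"

definition bd :: "'a::linorder set \<Rightarrow> 'a set set \<Rightarrow> ('a set \<Rightarrow> 'k::field) \<Rightarrow> ('a set \<Rightarrow> 'k)" where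
  "bd V \<Delta> c = (\<lambda>\<tau>. if \<tau> \<in> \<Delta> then
      (\<Sum>v\<in>V - \<tau>. if insert v \<tau> \<in> \<Delta>
          then (-1) ^ card {u\<in>\<tau>. u < v} * c (insert v \<tau>) else 0)
    else 0)"

definition cycles :: "'k::field itself \<Rightarrow> 'a::linorder set \<Rightarrow> 'a set set \<Rightarrow> nat \<Rightarrow> ('a set \<Rightarrow> 'k) set" where
  "cycles K V \<Delta> k = {c \<in> chains K \<Delta> k. bd V \<Delta> c = 0}"

definition boundaries :: "'k::field itself \<Rightarrow> 'a::linorder set \<Rightarrow> 'a set set \<Rightarrow> nat \<Rightarrow> ('a set \<Rightarrow> 'k) set" where
  "boundaries K V \<Delta> k = bd V \<Delta> ` chains K \<Delta> (Suc k)"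

text \<open>dim of reduced homology in degree k-1 (k = number of vertices of faces):
  dim Z - dim B.\<close>
definition reduced_betti :: "'k::field itself \<Rightarrow> 'a::linorder set \<Rightarrow> 'a set set \<Rightarrow> nat \<Rightarrow> nat" where
  "reduced_betti K V \<Delta> k =
     vector_space.dim (chain_scale :: 'k \<Rightarrow> _) (cycles K V \<Delta> k)
     - vector_space.dim (chain_scale :: 'k \<Rightarrow> _) (boundaries K V \<Delta> k)"

text \<open>Total reduced Betti number b~(G) = sum over i \<ge> -1 of dim H~_i(Ind G; K).
  Faces have at most card V vertices, so the sum is over k = 0..card V.\<close>
definition btilde :: "'k::field itself \<Rightarrow> 'a::linorder set \<Rightarrow> ('a \<Rightarrow> 'a \<Rightarrow> bool) \<Rightarrow> nat" where
  "btilde K V E = (\<Sum>k\<le>card V. reduced_betti K V (Ind V E) k)"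

definition TC_adj :: "nat \<Rightarrow> nat \<Rightarrow> nat \<Rightarrow> bool" where
  "TC_adj n i j = (i \<noteq> j \<and> (int i - int j) mod int n \<in> {int n - 2, int n - 1, 1, 2})"

end

theory Submission
  imports Defs
begin

context vector_space begin

lemma fd_finite_basis:
  assumes "S \<subseteq> span W" "finite W"
  obtains B where "B \<subseteq> S" "independent B" "S \<subseteq> span B" "finite B" "card B = dim S"
proof -
  obtain B where B: "B \<subseteq> S" "independent B" "S \<subseteq> span B" "card B = dim S" by (rule basis_exists)
  have "finite B" using independent_span_bound[OF assms(2) B(2)] B(1) assms(1) by blast
  with B that show ?thesis by blast
qed

lemma dim_mono_fd:
  assumes "S \<subseteq> span T" "T \<subseteq> span W" "finite W"
  shows "dim S \<le> dim T"
proof -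
  obtain BT where BT: "BT \<subseteq> T" "independent BT" "T \<subseteq> span BT" "finite BT" "card BT = dim T"
    using fd_finite_basis[OF assms(2,3)] by blast
  have "S \<subseteq> span BT" using assms(1) BT(3) by (metis span_mono span_span subset_trans)
  then show ?thesis using dim_le_card BT by metis
qed

lemma dim_zero_set: "S \<subseteq> {0} \<Longrightarrow> dim S = 0"
  using dim_le_card[of S "{}"] by auto

lemma span_disjoint_zero:
  assumes "independent B" "X \<subseteq> B" "Y \<subseteq> B" "X \<inter> Y = {}" "x \<in> span X" "x \<in> span Y"
  shows "x = 0"
proof -
  have rx: "representation B x = representation X x"
    by (rule representation_extend) (use assms in auto)
  have ry: "representation B x = representation Y x"
    by (rule representation_extend) (use assms in auto)
  have "\<forall>b. representation B x b = 0"
    using representation_ne_zero[of X x] representation_ne_zero[of Y x] rx ry assms(4)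
    by (metis disjoint_iff)
  then have e: "{b. representation B x b \<noteq> 0} = {}" by auto
  have "x \<in> span B" using assms span_mono by blast
  then show ?thesis using sum_nonzero_representation_eq[OF assms(1)] e by force
qed

lemma rank_nullity_fd:
  assumes lf: "Vector_Spaces.linear scale scale f" and S: "subspace S" and W: "S \<subseteq> span W" "finite W"
  shows "dim S = dim {x\<in>S. f x = 0} + dim (f ` S)"
proof -
  interpret lf: Vector_Spaces.linear scale scale f by fact
  let ?K = "{x\<in>S. f x = 0}"
  obtain BK where BK: "BK \<subseteq> ?K" "independent BK" "?K \<subseteq> span BK" "card BK = dim ?K"
    by (rule basis_exists)
  obtain B where B: "BK \<subseteq> B" "B \<subseteq> S" "independent B" "S \<subseteq> span B"
    using maximal_independent_subset_extend[of BK S] BK by auto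
  have fB: "finite B" using independent_span_bound[OF W(2) B(3)] B(2) W(1) by auto
  have cB: "card B = dim S" using basis_card_eq_dim B by auto
  define D where "D = B - BK"
  have spanB: "span B = S" using B S span_minimal span_mono
    by (metis span_subspace)
  have sD: "span D \<subseteq> S" using spanB span_mono[of D B] D_def by auto
  have inj: "inj_on f (span D)"
  proof -
    have "\<forall>x\<in>span D. f x = 0 \<longrightarrow> x = 0"
    proof (intro ballI impI)
      fix x assume x: "x \<in> span D" "f x = 0"
      then have "x \<in> ?K" using sD by auto
      then have "x \<in> span BK" using BK by auto
      then show "x = 0" using span_disjoint_zero[OF B(3), of D BK x] x B(1) D_def by auto
    qed
    then show ?thesis using lf.inj_on_iff_eq_0[OF subspace_span] by blast
  qed
  have indD: "independent (f ` D)"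
    using lf.independent_injective_image[OF independent_mono[OF B(3)] inj] D_def by auto
  have injD: "inj_on f D" using inj inj_on_subset span_superset by blast
  have fS: "f ` S = span (f ` D)"
  proof -
    have "f ` S = span (f ` B)" using lf.span_image spanB by auto
    also have "span (f ` B) = span (f ` D)"
    proof -
      have "f ` B \<subseteq> span (f ` D)"
      proof
        fix y assume "y \<in> f ` B"
        then obtain b where b: "b \<in> B" "y = f b" by auto
        show "y \<in> span (f ` D)"
        proof (cases "b \<in> BK")
          case True then have "y = 0" using BK b by auto
          then show ?thesis using span_zero by simp
        next
          case False then show ?thesis using b D_def span_base by auto
        qed
      qed
      moreover have "f ` D \<subseteq> span (f ` B)"
      proof -
        have "f ` D \<subseteq> f ` B" unfolding D_def by (rule image_mono) (rule Diff_subset)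
        also have "f ` B \<subseteq> span (f ` B)" by (rule span_superset)
        finally show ?thesis .
      qed
      ultimately show ?thesis by (simp only: span_eq)
    qed
    finally show ?thesis .
  qed
  have "dim (f ` S) = card (f ` D)" using fS dim_span_eq_card_independent[OF indD] by simp
  also have "\<dots> = card D" using card_image[OF injD] .
  also have "\<dots> = card B - card BK" using D_def fB B(1) by (simp add: card_Diff_subset finite_subset)
  finally have "dim (f ` S) = card B - card BK" .
  moreover have "card BK \<le> card B" using B(1) fB card_mono by auto
  ultimately show ?thesis using cB BK(4) by simp
qed

lemma dim_inj_image_fd:
  assumes lf: "Vector_Spaces.linear scale scale f" and S: "subspace S" and W: "S \<subseteq> span W" "finite W"
    and inj: "\<And>x. x \<in> S \<Longrightarrow> f x = 0 \<Longrightarrow> x = 0"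
  shows "dim (f ` S) = dim S"
proof -
  have "dim {x\<in>S. f x = 0} = 0" by (rule dim_zero_set) (use inj in auto)
  then show ?thesis using rank_nullity_fd[OF assms(1-4)] by simp
qed

end

lemma sum_fun_app: "(\<Sum>x\<in>A. f x) t = (\<Sum>x\<in>A. f x t)"
  by (induct A rule: infinite_finite_induct) auto

interpretation cs: vector_space "chain_scale :: 'k::field \<Rightarrow> ('a set \<Rightarrow> 'k) \<Rightarrow> ('a set \<Rightarrow> 'k)"
  by unfold_locales (auto simp: chain_scale_def fun_eq_iff algebra_simps)

lemma chain_scale_app[simp]: "chain_scale a c \<sigma> = a * c \<sigma>"
  by (simp add: chain_scale_def)

definition ind :: "'a set \<Rightarrow> ('a set \<Rightarrow> 'k::field)" where
  "ind \<sigma> = (\<lambda>\<tau>. if \<tau> = \<sigma> then 1 else 0)"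

definition SP :: "'a set set \<Rightarrow> ('a set \<Rightarrow> 'k::field) set" where
  "SP F = {c. \<forall>\<sigma>. c \<sigma> \<noteq> 0 \<longrightarrow> \<sigma> \<in> F}"

lemma SP_span:
  assumes "finite F"
  shows "(SP F :: ('a set \<Rightarrow> 'k::field) set) \<subseteq> cs.span (ind ` F)"
proof
  fix c :: "'a set \<Rightarrow> 'k" assume c: "c \<in> SP F"
  have "c = (\<Sum>\<sigma>\<in>F. chain_scale (c \<sigma>) (ind \<sigma>))"
  proof
    fix \<tau>
    show "c \<tau> = (\<Sum>\<sigma>\<in>F. chain_scale (c \<sigma>) (ind \<sigma>)) \<tau>"
      unfolding sum_fun_app using c assms by (auto simp: ind_def SP_def if_distrib cong: if_cong)
  qed
  also have "\<dots> \<in> cs.span (ind ` F)"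
    by (intro cs.span_sum cs.span_scale cs.span_base) auto
  finally show "c \<in> cs.span (ind ` F)" .
qed

lemma SP_mono: "F \<subseteq> G \<Longrightarrow> SP F \<subseteq> SP G"
  unfolding SP_def by auto

lemma subspace_SP: "cs.subspace (SP F)"
  unfolding cs.subspace_def SP_def by auto (metis add.right_neutral)

lemma chains_SP: "chains K \<Delta> k \<subseteq> SP \<Delta>"
  unfolding chains_def SP_def by auto

lemma subspace_chains: "cs.subspace (chains K \<Delta> k)"
  unfolding cs.subspace_def chains_def by auto (metis add.right_neutral)+

lemma Ind_Pow: "Ind V E \<subseteq> Pow V"
  unfolding Ind_def by auto

lemma finite_Ind: "finite V \<Longrightarrow> finite (Ind V E)"
  using Ind_Pow finite_subset by (metis finite_Pow_iff)

lemma linear_bd: "Vector_Spaces.linear chain_scale chain_scale (bd V \<Delta> :: ('a::linorder set \<Rightarrow> 'k::field) \<Rightarrow> _)"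
  unfolding Vector_Spaces.linear_iff
  by (auto simp: cs.vector_space_axioms bd_def fun_eq_iff sum.distrib sum_distrib_left
      distrib_left algebra_simps if_distrib cong: if_cong)
     (subst sum.distrib[symmetric], auto intro!: sum.cong)

lemma bd_SP: "bd V \<Delta> c \<in> SP \<Delta>"
  unfolding SP_def bd_def by auto

lemma fd: "finite V \<Longrightarrow> S \<subseteq> SP (Ind V E) \<Longrightarrow> S \<subseteq> cs.span (ind ` Ind V E)"
  using SP_span[OF finite_Ind] by blast

definition sg :: "'a::linorder set \<Rightarrow> 'a \<Rightarrow> 'k::field" where
  "sg \<rho> v = (-1) ^ card {u\<in>\<rho>. u < v}"

lemma bd_sg: "bd V \<Delta> c = (\<lambda>\<tau>. if \<tau> \<in> \<Delta> then
      (\<Sum>v\<in>V - \<tau>. if insert v \<tau> \<in> \<Delta> then sg \<tau> v * c (insert v \<tau>) else 0) else 0)"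
  unfolding bd_def sg_def ..

lemma sg_insert:
  assumes "finite \<rho>" "w \<notin> \<rho>"
  shows "(sg (insert w \<rho>) v :: 'k::field) = (if w < v then - sg \<rho> v else sg \<rho> v)"
proof -
  have "{u\<in>insert w \<rho>. u < v} = (if w < v then insert w {u\<in>\<rho>. u < v} else {u\<in>\<rho>. u < v})"
    by auto
  then show ?thesis using assms by (auto simp: sg_def)
qed

lemma sg_sq[simp]: "(sg \<rho> v :: 'k::field) * sg \<rho> v = 1"
  by (simp add: sg_def power_mult_distrib[symmetric])

definition psi :: "'a \<Rightarrow> ('a::linorder set \<Rightarrow> 'k::field) \<Rightarrow> ('a set \<Rightarrow> 'k)" where
  "psi w c = (\<lambda>\<sigma>. if w \<in> \<sigma> then sg (\<sigma> - {w}) w * c (\<sigma> - {w}) else 0)"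

lemma Ind_finite_face: "finite V \<Longrightarrow> \<sigma> \<in> Ind V E \<Longrightarrow> finite \<sigma>"
  unfolding Ind_def by (auto intro: finite_subset)

lemma Ind_down: "\<sigma> \<in> Ind V E \<Longrightarrow> \<tau> \<subseteq> \<sigma> \<Longrightarrow> \<tau> \<in> Ind V E"
  unfolding Ind_def by auto

lemma cone_bd:
  fixes c :: "'a::linorder set \<Rightarrow> 'k::field"
  assumes fin: "finite V" and w: "w \<in> V" and iso: "\<forall>u\<in>V. \<not> E w u \<and> \<not> E u w"
    and c: "c \<in> SP (Ind V E)"
  shows "bd V (Ind V E) (psi w c) \<tau> = c \<tau> - psi w (bd V (Ind V E) c) \<tau>"
proof -
  define \<Delta> where "\<Delta> = Ind V E"
  have cf1: "insert w \<sigma> \<in> \<Delta>" if "\<sigma> \<in> \<Delta>" for \<sigma>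
    using that w iso unfolding \<Delta>_def Ind_def by auto
  have cf3: "insert w \<sigma> \<in> \<Delta> \<longleftrightarrow> \<sigma> \<in> \<Delta>" for \<sigma>
    using cf1 Ind_down[of "insert w \<sigma>" V E \<sigma>] unfolding \<Delta>_def by auto
  have c0: "c \<sigma> = 0" if "\<sigma> \<notin> \<Delta>" for \<sigma> using c that unfolding SP_def \<Delta>_def by auto
  show ?thesis
    unfolding \<Delta>_def[symmetric]
  proof (cases "\<tau> \<in> \<Delta>")
    case False
    have "psi w (bd V \<Delta> c) \<tau> = 0"
    proof (cases "w \<in> \<tau>")
      case True
      then have "\<tau> - {w} \<notin> \<Delta>" using False cf1[of "\<tau> - {w}"] by (metis insert_Diff)
      then show ?thesis by (simp add: psi_def bd_sg)
    qed (simp add: psi_def)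
    then show "bd V \<Delta> (psi w c) \<tau> = c \<tau> - psi w (bd V \<Delta> c) \<tau>"
      using False c0 by (simp add: bd_sg)
  next
    case tD: True
    have ft: "finite \<tau>" using tD fin Ind_finite_face unfolding \<Delta>_def by blast
    show "bd V \<Delta> (psi w c) \<tau> = c \<tau> - psi w (bd V \<Delta> c) \<tau>"
    proof (cases "w \<in> \<tau>")
      case False
      have "(\<Sum>u\<in>V - \<tau>. if insert u \<tau> \<in> \<Delta> then sg \<tau> u * psi w c (insert u \<tau>) else 0)
          = (\<Sum>u\<in>V - \<tau>. if u = w then c \<tau> else 0)"
      proof (rule sum.cong[OF refl])
        fix u assume u: "u \<in> V - \<tau>"
        show "(if insert u \<tau> \<in> \<Delta> then sg \<tau> u * psi w c (insert u \<tau>) else 0) = (if u = w then c \<tau> else 0)"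
        proof (cases "u = w")
          case True
          have "insert w \<tau> - {w} = \<tau>" using False by auto
          then show ?thesis using True cf1[OF tD] by (simp add: psi_def mult.assoc[symmetric])
        next
          case False
          then show ?thesis using \<open>w \<notin> \<tau>\<close> by (simp add: psi_def)
        qed
      qed
      also have "\<dots> = c \<tau>" using w False fin by (simp add: sum.delta)
      finally have "bd V \<Delta> (psi w c) \<tau> = c \<tau>" using tD by (simp add: bd_sg[of V \<Delta> "psi w c"])
      moreover have "psi w (bd V \<Delta> c) \<tau> = 0" using False by (simp add: psi_def)
      ultimately show ?thesis by simp
    next
      case True
      define \<rho> where "\<rho> = \<tau> - {w}"
      have t: "\<tau> = insert w \<rho>" and wr: "w \<notin> \<rho>" using True \<rho>_def by auto
      have rD: "\<rho> \<in> \<Delta>" using tD t cf3 by auto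
      have fr: "finite \<rho>" using ft t by auto
      define S where "S = (\<Sum>u\<in>V - \<tau>. if insert u \<rho> \<in> \<Delta> then sg \<rho> u * c (insert u \<rho>) else 0)"
      have Vr: "V - \<rho> = insert w (V - \<tau>)" using t w wr by auto
      have "bd V \<Delta> c \<rho> = (\<Sum>u\<in>V - \<rho>. if insert u \<rho> \<in> \<Delta> then sg \<rho> u * c (insert u \<rho>) else 0)"
        using rD by (simp add: bd_sg)
      also have "\<dots> = (if insert w \<rho> \<in> \<Delta> then sg \<rho> w * c (insert w \<rho>) else 0) + S"
        unfolding Vr S_def by (rule sum.insert) (use fin True in auto)
      also have "\<dots> = sg \<rho> w * c \<tau> + S" using tD t by simp
      finally have "bd V \<Delta> c \<rho> = sg \<rho> w * c \<tau> + S" .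
      then have R: "psi w (bd V \<Delta> c) \<tau> = c \<tau> + sg \<rho> w * S"
        using True by (simp add: psi_def \<rho>_def[symmetric] distrib_left mult.assoc[symmetric])
      have "bd V \<Delta> (psi w c) \<tau> = (\<Sum>u\<in>V - \<tau>. if insert u \<tau> \<in> \<Delta> then sg \<tau> u * psi w c (insert u \<tau>) else 0)"
        using tD by (simp add: bd_sg[of V \<Delta> "psi w c"])
      also have "\<dots> = (\<Sum>u\<in>V - \<tau>. if insert u \<rho> \<in> \<Delta> then - (sg \<rho> w * (sg \<rho> u * c (insert u \<rho>))) else 0)"
      proof (rule sum.cong[OF refl])
        fix u assume u: "u \<in> V - \<tau>"
        then have uw: "u \<noteq> w" "u \<notin> \<rho>" using t by auto
        have e1: "insert u \<tau> - {w} = insert u \<rho>" using t uw wr by auto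
        have e2: "insert u \<tau> \<in> \<Delta> \<longleftrightarrow> insert u \<rho> \<in> \<Delta>"
          using cf3[of "insert u \<rho>"] t by (simp add: insert_commute)
        have s1: "(sg \<tau> u :: 'k) = (if w < u then - sg \<rho> u else sg \<rho> u)"
          using sg_insert[OF fr wr, of u, where 'k='k] t by simp
        have s2: "(sg (insert u \<rho>) w :: 'k) = (if u < w then - sg \<rho> w else sg \<rho> w)"
          using sg_insert[OF fr uw(2), of w, where 'k='k] by simp
        have "(sg \<tau> u :: 'k) * sg (insert u \<rho>) w = - sg \<rho> w * sg \<rho> u"
          using s1 s2 uw(1) by (cases "w < u") auto
        then have P: "\<And>x. (sg \<tau> u :: 'k) * (sg (insert u \<rho>) w * x) = - (sg \<rho> w * (sg \<rho> u * x))"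
          by (metis mult.assoc mult_minus_left)
        show "(if insert u \<tau> \<in> \<Delta> then sg \<tau> u * psi w c (insert u \<tau>) else 0) =
            (if insert u \<rho> \<in> \<Delta> then - (sg \<rho> w * (sg \<rho> u * c (insert u \<rho>))) else 0)"
          using e1 e2 True by (simp add: psi_def P)
      qed
      also have "\<dots> = - sg \<rho> w * S"
        unfolding S_def sum_distrib_left by (intro sum.cong refl) auto
      finally have "bd V \<Delta> (psi w c) \<tau> = - sg \<rho> w * S" .
      then show ?thesis using R by simp
    qed
  qed
qed

lemma fdW: "finite V \<Longrightarrow> S \<subseteq> SP (Ind V E) \<Longrightarrow> finite (ind ` Ind V E) \<and> S \<subseteq> cs.span (ind ` Ind V E)"
  using fd[of V S E] finite_Ind[of V E] by simp

lemma cycles_SP: "cycles K V \<Delta> k \<subseteq> SP \<Delta>"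
  unfolding cycles_def using chains_SP by blast

lemma boundaries_SP: "boundaries K V \<Delta> k \<subseteq> SP \<Delta>"
  unfolding boundaries_def using bd_SP by blast

lemma betti_cone:
  fixes K :: "'k::field itself" and V :: "'a::linorder set"
  assumes fin: "finite V" and w: "w \<in> V" and iso: "\<forall>u\<in>V. \<not> E w u \<and> \<not> E u w"
  shows "reduced_betti K V (Ind V E) k = 0"
proof -
  define \<Delta> where "\<Delta> = Ind V E"
  have cf1: "insert w \<sigma> \<in> \<Delta>" if "\<sigma> \<in> \<Delta>" for \<sigma>
    using that w iso unfolding \<Delta>_def Ind_def by auto
  have sub: "cycles K V \<Delta> k \<subseteq> boundaries K V \<Delta> k"
  proof
    fix z :: "'a set \<Rightarrow> 'k" assume z: "z \<in> cycles K V \<Delta> k"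
    then have zc: "z \<in> chains K \<Delta> k" and bz: "bd V \<Delta> z = 0" by (auto simp: cycles_def)
    have zSP: "z \<in> SP \<Delta>" using zc chains_SP by blast
    have "psi w z \<in> chains K \<Delta> (Suc k)"
      unfolding chains_def
    proof (intro CollectI allI impI)
      fix \<sigma> assume ne: "psi w z \<sigma> \<noteq> 0"
      then have ws: "w \<in> \<sigma>" and nz: "z (\<sigma> - {w}) \<noteq> 0" by (auto simp: psi_def split: if_splits)
      then have m: "\<sigma> - {w} \<in> \<Delta>" "card (\<sigma> - {w}) = k" using zc unfolding chains_def by auto
      have s: "\<sigma> = insert w (\<sigma> - {w})" using ws by auto
      have "\<sigma> \<in> \<Delta>" using cf1[OF m(1)] s by simp
      moreover have "finite \<sigma>" using \<open>\<sigma> \<in> \<Delta>\<close> fin Ind_finite_face unfolding \<Delta>_def by blast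
      ultimately show "\<sigma> \<in> \<Delta> \<and> card \<sigma> = Suc k"
        using m(2) s by (metis card_insert_disjoint finite_Diff Diff_iff insertI1)
    qed
    moreover have "bd V \<Delta> (psi w z) = z"
    proof
      fix \<tau>
      have "psi w (bd V \<Delta> z) \<tau> = 0" using bz by (simp add: psi_def)
      then show "bd V \<Delta> (psi w z) \<tau> = z \<tau>"
        using cone_bd[OF fin w iso, of z \<tau>] zSP unfolding \<Delta>_def by simp
    qed
    ultimately show "z \<in> boundaries K V \<Delta> k"
      unfolding boundaries_def by (metis image_eqI)
  qed
  have W: "finite (ind ` \<Delta>)" "boundaries K V \<Delta> k \<subseteq> cs.span (ind ` \<Delta>)"
    using fdW[OF fin boundaries_SP[of K V "Ind V E" k]] unfolding \<Delta>_def by auto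
  have "cs.dim (cycles K V \<Delta> k) \<le> cs.dim (boundaries K V \<Delta> k)"
    by (rule cs.dim_mono_fd[OF _ W(2) W(1)]) (use sub cs.span_superset in blast)
  then show ?thesis unfolding reduced_betti_def \<Delta>_def by simp
qed

lemma btilde_cone:
  fixes K :: "'k::field itself" and V :: "'a::linorder set"
  assumes "finite V" "w \<in> V" "\<forall>u\<in>V. \<not> E w u \<and> \<not> E u w"
  shows "btilde K V E = 0"
  unfolding btilde_def using betti_cone[OF assms, where K=K] by simp

lemma betti_vanish:
  fixes K :: "'k::field itself" and V :: "'a::linorder set"
  assumes fin: "finite V" and k: "card V < k"
  shows "reduced_betti K V (Ind V E) k = 0"
proof -
  have "cycles K V (Ind V E) k \<subseteq> {0}"
  proof
    fix c :: "'a set \<Rightarrow> 'k" assume "c \<in> cycles K V (Ind V E) k"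
    then have c: "c \<in> chains K (Ind V E) k" by (simp add: cycles_def)
    have "c \<sigma> = 0" for \<sigma>
    proof (rule ccontr)
      assume "c \<sigma> \<noteq> 0"
      then have "\<sigma> \<in> Ind V E" "card \<sigma> = k" using c by (auto simp: chains_def)
      then have "card \<sigma> \<le> card V" using fin by (meson Ind_Pow PowD card_mono subsetD)
      then show False using \<open>card \<sigma> = k\<close> k by simp
    qed
    then show "c \<in> {0}" by auto
  qed
  from cs.dim_zero_set[OF this] show ?thesis unfolding reduced_betti_def by simp
qed

lemma btilde_ext:
  fixes K :: "'k::field itself" and V :: "'a::linorder set"
  assumes fin: "finite V" and m: "card V \<le> m"
  shows "(\<Sum>k\<le>m. reduced_betti K V (Ind V E) k) = btilde K V E"
  unfolding btilde_def
  by (rule sum.mono_neutral_right) (use m betti_vanish[OF fin, where K=K] in auto)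

lemma btilde_empty:
  fixes K :: "'k::field itself" and E :: "'a::linorder \<Rightarrow> 'a \<Rightarrow> bool"
  shows "btilde K {} E \<le> 1"
proof -
  have I: "Ind {} E = {{}}" unfolding Ind_def by auto
  have "cs.dim (cycles K {} (Ind {} E) 0) \<le> card (ind ` Ind {} E :: ('a set \<Rightarrow> 'k) set)"
    by (rule cs.dim_le_card) (use fdW[OF finite.emptyI cycles_SP[of K "{}" "Ind {} E" 0]] in auto)
  also have "\<dots> \<le> 1" unfolding I by simp
  finally show ?thesis unfolding btilde_def reduced_betti_def by simp
qed

definition pv :: "'a \<Rightarrow> ('a set \<Rightarrow> 'k::field) \<Rightarrow> ('a set \<Rightarrow> 'k)" where
  "pv v c = (\<lambda>\<sigma>. if v \<in> \<sigma> then c \<sigma> else 0)"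

definition phi :: "'a::linorder \<Rightarrow> ('a set \<Rightarrow> 'k::field) \<Rightarrow> ('a set \<Rightarrow> 'k)" where
  "phi v c = (\<lambda>\<rho>. if v \<notin> \<rho> then sg \<rho> v * c (insert v \<rho>) else 0)"

lemma linear_pv: "Vector_Spaces.linear chain_scale chain_scale (pv v :: ('a set \<Rightarrow> 'k::field) \<Rightarrow> _)"
  unfolding Vector_Spaces.linear_iff
  by (auto simp: cs.vector_space_axioms pv_def fun_eq_iff)

lemma linear_phi: "Vector_Spaces.linear chain_scale chain_scale (phi v :: ('a::linorder set \<Rightarrow> 'k::field) \<Rightarrow> _)"
  unfolding Vector_Spaces.linear_iff
  by (auto simp: cs.vector_space_axioms phi_def fun_eq_iff algebra_simps)

lemma linear_uminus': "Vector_Spaces.linear chain_scale chain_scale (uminus :: ('a set \<Rightarrow> 'k::field) \<Rightarrow> _)"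
  unfolding Vector_Spaces.linear_iff
  by (auto simp: cs.vector_space_axioms fun_eq_iff algebra_simps)

lemma sg_nz: "(sg \<rho> v :: 'k::field) \<noteq> 0"
  by (simp add: sg_def)

lemma Ind_sub: "V' \<subseteq> V \<Longrightarrow> Ind V' E \<subseteq> Ind V E"
  unfolding Ind_def by auto

lemma D1_eq: "Ind (V - {v}) E = {\<sigma> \<in> Ind V E. v \<notin> \<sigma>}"
  unfolding Ind_def by auto

lemma D2_iff:
  assumes "v \<in> V" "\<not> E v v" "v \<notin> \<rho>"
  shows "insert v \<rho> \<in> Ind V E \<longleftrightarrow> \<rho> \<in> Ind (V - insert v {u. E v u \<or> E u v}) E"
  using assms unfolding Ind_def by auto

lemma D2_sub: "\<rho> \<in> Ind (V - insert v N) E \<Longrightarrow> v \<notin> \<rho>"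
  unfolding Ind_def by auto

lemma bd_restrict:
  fixes a :: "'a::linorder set \<Rightarrow> 'k::field"
  assumes fin: "finite V" and a: "\<And>\<sigma>. v \<in> \<sigma> \<Longrightarrow> a \<sigma> = 0"
  shows "bd V (Ind V E) a = bd (V - {v}) (Ind (V - {v}) E) a"
proof
  fix \<tau>
  let ?D = "Ind V E" and ?D1 = "Ind (V - {v}) E"
  show "bd V ?D a \<tau> = bd (V - {v}) ?D1 a \<tau>"
  proof (cases "\<tau> \<in> ?D1")
    case True
    then have tD: "\<tau> \<in> ?D" "v \<notin> \<tau>" using D1_eq[of V v E] by auto
    have "bd V ?D a \<tau> = (\<Sum>u\<in>V - \<tau>. if insert u \<tau> \<in> ?D then sg \<tau> u * a (insert u \<tau>) else 0)"
      using tD by (simp add: bd_sg)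
    also have "\<dots> = (\<Sum>u\<in>(V - {v}) - \<tau>. if insert u \<tau> \<in> ?D then sg \<tau> u * a (insert u \<tau>) else 0)"
    proof (cases "v \<in> V")
      case True
      have "V - \<tau> = insert v ((V - {v}) - \<tau>)" using True tD by auto
      then show ?thesis using fin a by (simp add: sum.insert)
    next
      case False then show ?thesis by (simp add: Diff_insert_absorb)
    qed
    also have "\<dots> = (\<Sum>u\<in>(V - {v}) - \<tau>. if insert u \<tau> \<in> ?D1 then sg \<tau> u * a (insert u \<tau>) else 0)"
      by (intro sum.cong refl) (use tD D1_eq[of V v E] in auto)
    also have "\<dots> = bd (V - {v}) ?D1 a \<tau>" using True by (simp add: bd_sg)
    finally show ?thesis .
  next
    case False
    have "bd V ?D a \<tau> = 0"
    proof (cases "\<tau> \<in> ?D")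
      case True
      then have "v \<in> \<tau>" using False D1_eq[of V v E] by auto
      then have "\<And>u. a (insert u \<tau>) = 0" using a by simp
      then show ?thesis unfolding bd_sg by (auto intro!: sum.neutral)
    qed (simp add: bd_sg)
    then show ?thesis using False by (simp add: bd_sg)
  qed
qed

lemma phi_bd:
  fixes c :: "'a::linorder set \<Rightarrow> 'k::field"
  assumes fin: "finite V" and vV: "v \<in> V" and nvv: "\<not> E v v"
  defines "V2 \<equiv> V - insert v {u. E v u \<or> E u v}"
  shows "phi v (pv v (bd V (Ind V E) c)) = - bd V2 (Ind V2 E) (phi v c)"
proof
  fix \<rho>
  let ?D = "Ind V E" and ?D2 = "Ind V2 E"
  show "phi v (pv v (bd V ?D c)) \<rho> = (- bd V2 ?D2 (phi v c)) \<rho>"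
  proof (cases "v \<in> \<rho>")
    case True
    then have "\<rho> \<notin> ?D2" unfolding V2_def Ind_def by auto
    then show ?thesis using True by (simp add: phi_def bd_sg)
  next
    case vr: False
    have iff: "insert v \<sigma> \<in> ?D \<longleftrightarrow> \<sigma> \<in> ?D2" if "v \<notin> \<sigma>" for \<sigma>
      using D2_iff[of v V E \<sigma>] vV nvv that unfolding V2_def by simp
    show ?thesis
    proof (cases "\<rho> \<in> ?D2")
      case False
      then show ?thesis using vr iff[OF vr] by (simp add: phi_def pv_def bd_sg)
    next
      case rD: True
      have fr: "finite \<rho>" using rD fin Ind_finite_face[of V2 \<rho> E] unfolding V2_def by auto
      define W where "W = {w \<in> V2 - \<rho>. insert w \<rho> \<in> ?D2}"
      have fW: "finite W" using fin unfolding W_def V2_def by auto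
      have W1: "{w \<in> V - insert v \<rho>. insert w (insert v \<rho>) \<in> ?D} = W"
      proof -
        have f1: "w \<in> V2" if "insert w \<rho> \<in> ?D2" for w using that unfolding Ind_def by auto
        have f2: "insert w (insert v \<rho>) \<in> ?D \<longleftrightarrow> insert w \<rho> \<in> ?D2" if "w \<noteq> v" for w
          using iff[of "insert w \<rho>"] that vr by (simp add: insert_commute)
        have f3: "w \<in> V \<and> w \<noteq> v" if "w \<in> V2" for w using that unfolding V2_def by auto
        show ?thesis
        proof (rule set_eqI, rule iffI)
          fix w assume "w \<in> {w \<in> V - insert v \<rho>. insert w (insert v \<rho>) \<in> ?D}"
          then have "w \<noteq> v" "w \<notin> \<rho>" "insert w (insert v \<rho>) \<in> ?D" by auto
          then have "insert w \<rho> \<in> ?D2" "w \<notin> \<rho>" using f2 by auto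
          then show "w \<in> W" using f1 unfolding W_def by auto
        next
          fix w assume "w \<in> W"
          then have "w \<in> V2" "w \<notin> \<rho>" "insert w \<rho> \<in> ?D2" unfolding W_def by auto
          then show "w \<in> {w \<in> V - insert v \<rho>. insert w (insert v \<rho>) \<in> ?D}"
            using f2 f3 by auto
        qed
      qed
      have "phi v (pv v (bd V ?D c)) \<rho> = sg \<rho> v * bd V ?D c (insert v \<rho>)"
        using vr by (simp add: phi_def pv_def)
      also have "bd V ?D c (insert v \<rho>) =
          (\<Sum>w\<in>V - insert v \<rho>. if insert w (insert v \<rho>) \<in> ?D then sg (insert v \<rho>) w * c (insert w (insert v \<rho>)) else 0)"
        using iff[OF vr] rD by (simp add: bd_sg)
      also have "\<dots> = (\<Sum>w\<in>W. sg (insert v \<rho>) w * c (insert w (insert v \<rho>)))"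
        unfolding W1[symmetric] by (rule sum.inter_filter[symmetric]) (use fin in auto)
      finally have L: "phi v (pv v (bd V ?D c)) \<rho> = (\<Sum>w\<in>W. sg \<rho> v * (sg (insert v \<rho>) w * c (insert w (insert v \<rho>))))"
        by (simp add: sum_distrib_left)
      have "bd V2 ?D2 (phi v c) \<rho> = (\<Sum>w\<in>V2 - \<rho>. if insert w \<rho> \<in> ?D2 then sg \<rho> w * phi v c (insert w \<rho>) else 0)"
        using rD by (simp add: bd_sg)
      also have "\<dots> = (\<Sum>w\<in>W. sg \<rho> w * phi v c (insert w \<rho>))"
        unfolding W_def by (rule sum.inter_filter[symmetric]) (use fin in \<open>auto simp: V2_def\<close>)
      finally have R: "bd V2 ?D2 (phi v c) \<rho> = (\<Sum>w\<in>W. sg \<rho> w * phi v c (insert w \<rho>))" .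
      have "(\<Sum>w\<in>W. sg \<rho> v * (sg (insert v \<rho>) w * c (insert w (insert v \<rho>))))
          = (\<Sum>w\<in>W. - (sg \<rho> w * phi v c (insert w \<rho>)))"
      proof (intro sum.cong refl)
        fix w assume w: "w \<in> W"
        then have wv: "w \<noteq> v" "w \<notin> \<rho>" unfolding W_def V2_def by auto
        have s1: "(sg (insert v \<rho>) w :: 'k) = (if v < w then - sg \<rho> w else sg \<rho> w)"
          using sg_insert[OF fr vr, of w, where 'k='k] by simp
        have s2: "(sg (insert w \<rho>) v :: 'k) = (if w < v then - sg \<rho> v else sg \<rho> v)"
          using sg_insert[OF fr wv(2), of v, where 'k='k] by simp
        have P: "(sg \<rho> v :: 'k) * sg (insert v \<rho>) w = - (sg \<rho> w * sg (insert w \<rho>) v)"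
          using s1 s2 wv(1) by (cases "v < w") auto
        have "phi v c (insert w \<rho>) = sg (insert w \<rho>) v * c (insert w (insert v \<rho>))"
          using wv vr by (simp add: phi_def insert_commute)
        then show "sg \<rho> v * (sg (insert v \<rho>) w * c (insert w (insert v \<rho>))) = - (sg \<rho> w * phi v c (insert w \<rho>))"
          using P by (simp add: mult.assoc[symmetric])
      qed
      then show ?thesis using L R by (simp add: sum_negf)
    qed
  qed
qed

lemma subspace_lin_image:
  assumes "Vector_Spaces.linear chain_scale chain_scale (f :: ('a set \<Rightarrow> 'k::field) \<Rightarrow> _)"
    and "cs.subspace S"
  shows "cs.subspace (f ` S)"
  using module_hom.subspace_image[OF iffD2[OF module_hom_iff_linear assms(1)] assms(2)] .

lemma chains_mono: "\<Delta> \<subseteq> \<Delta>' \<Longrightarrow> chains K \<Delta> k \<subseteq> chains K \<Delta>' k"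
  unfolding chains_def by auto

lemma pv_chains: "pv v ` chains K \<Delta> k \<subseteq> chains K \<Delta> k"
  unfolding chains_def pv_def by (auto split: if_splits)

lemma pv_SP: "x \<in> SP \<Delta> \<Longrightarrow> pv v x \<in> SP \<Delta>"
  unfolding SP_def pv_def by (auto split: if_splits)

lemma A_eq: "chains K (Ind (V - {v}) E) k = {x \<in> chains K (Ind V E) k. pv v x = 0}"
proof (rule set_eqI, rule iffI)
  fix x assume x: "x \<in> chains K (Ind (V - {v}) E) k"
  then have "x \<in> chains K (Ind V E) k" using chains_mono[OF Ind_sub[of "V - {v}" V E]] by blast
  moreover have "pv v x = 0"
  proof
    fix \<sigma> show "pv v x \<sigma> = 0 \<sigma>" using x unfolding chains_def pv_def Ind_def by auto
  qed
  ultimately show "x \<in> {x \<in> chains K (Ind V E) k. pv v x = 0}" by auto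
next
  fix x assume x: "x \<in> {x \<in> chains K (Ind V E) k. pv v x = 0}"
  have "v \<notin> \<sigma>" if "x \<sigma> \<noteq> 0" for \<sigma>
  proof
    assume "v \<in> \<sigma>"
    then have "pv v x \<sigma> = x \<sigma>" by (simp add: pv_def)
    then show False using x that by simp
  qed
  then show "x \<in> chains K (Ind (V - {v}) E) k" using x unfolding chains_def Ind_def by auto
qed

lemma phi_inj:
  fixes x :: "'a::linorder set \<Rightarrow> 'k::field"
  assumes "\<And>\<sigma>. v \<notin> \<sigma> \<Longrightarrow> x \<sigma> = 0" and "phi v x = 0"
  shows "x = 0"
proof
  fix \<sigma>
  show "x \<sigma> = 0 \<sigma>"
  proof (cases "v \<in> \<sigma>")
    case True
    have "phi v x (\<sigma> - {v}) = sg (\<sigma> - {v}) v * x \<sigma>"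
      using True by (simp add: phi_def insert_absorb)
    then show ?thesis using assms(2) sg_nz[of "\<sigma> - {v}" v, where 'k='k] by simp
  qed (use assms in simp)
qed

lemma pv_C0:
  assumes fin: "finite V"
  shows "pv v ` chains K (Ind V E) 0 \<subseteq> {0}"
proof
  fix x assume "x \<in> pv v ` chains K (Ind V E) 0"
  then obtain c where c: "c \<in> chains K (Ind V E) 0" "x = pv v c" by auto
  have "x \<sigma> = 0" for \<sigma>
  proof (cases "v \<in> \<sigma> \<and> c \<sigma> \<noteq> 0")
    case True
    then have "card \<sigma> = 0" "\<sigma> \<noteq> {}" "\<sigma> \<in> Ind V E" using c unfolding chains_def by auto
    then show ?thesis using Ind_finite_face[OF fin] by (metis card_0_eq)
  qed (use c in \<open>auto simp: pv_def\<close>)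
  then show "x \<in> {0}" by auto
qed

lemma M5:
  fixes K :: "'k::field itself" and V :: "'a::linorder set"
  assumes fin: "finite V" and vV: "v \<in> V" and nvv: "\<not> E v v" and k: "k \<ge> 1"
  defines "V2 \<equiv> V - insert v {u. E v u \<or> E u v}"
  shows "phi v ` pv v ` chains K (Ind V E) k = chains K (Ind V2 E) (k - 1)"
proof -
  have iff: "insert v \<sigma> \<in> Ind V E \<longleftrightarrow> \<sigma> \<in> Ind V2 E" if "v \<notin> \<sigma>" for \<sigma>
    using D2_iff[of v V E \<sigma>] vV nvv that unfolding V2_def by simp
  have v2: "v \<notin> \<rho>" if "\<rho> \<in> Ind V2 E" for \<rho> using that unfolding V2_def Ind_def by auto
  have ff: "finite \<rho>" if "\<rho> \<in> Ind V2 E" for \<rho>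
    using that fin Ind_finite_face[of V2 \<rho> E] unfolding V2_def by auto
  show ?thesis
  proof (rule set_eqI, rule iffI)
    fix d assume "d \<in> phi v ` pv v ` chains K (Ind V E) k"
    then obtain c where c: "c \<in> chains K (Ind V E) k" "d = phi v (pv v c)" by auto
    show "d \<in> chains K (Ind V2 E) (k - 1)"
      unfolding chains_def
    proof (intro CollectI allI impI)
      fix \<rho> assume "d \<rho> \<noteq> 0"
      then have vr: "v \<notin> \<rho>" and nz: "c (insert v \<rho>) \<noteq> 0" using c(2) by (auto simp: phi_def pv_def split: if_splits)
      then have "insert v \<rho> \<in> Ind V E" "card (insert v \<rho>) = k" using c(1) unfolding chains_def by auto
      then show "\<rho> \<in> Ind V2 E \<and> card \<rho> = k - 1" using iff[OF vr] ff vr by auto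
    qed
  next
    fix d assume d: "d \<in> chains K (Ind V2 E) (k - 1)"
    define c where "c = psi v d"
    have cC: "c \<in> chains K (Ind V E) k"
      unfolding chains_def
    proof (intro CollectI allI impI)
      fix \<sigma> assume "c \<sigma> \<noteq> 0"
      then have vs: "v \<in> \<sigma>" and nz: "d (\<sigma> - {v}) \<noteq> 0" unfolding c_def psi_def by (auto split: if_splits)
      then have m: "\<sigma> - {v} \<in> Ind V2 E" "card (\<sigma> - {v}) = k - 1" using d unfolding chains_def by auto
      have s: "\<sigma> = insert v (\<sigma> - {v})" using vs by auto
      have "\<sigma> \<in> Ind V E" using iff[of "\<sigma> - {v}"] m(1) s by auto
      moreover have "card \<sigma> = k" using m ff[OF m(1)] s k
        by (metis Diff_iff Suc_diff_le card_insert_disjoint insertI1 Suc_eq_plus1 le_add_diff_inverse2 plus_1_eq_Suc)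
      ultimately show "\<sigma> \<in> Ind V E \<and> card \<sigma> = k" by simp
    qed
    have "pv v c = c" unfolding c_def pv_def psi_def by auto
    moreover have "phi v c = d"
    proof
      fix \<rho>
      show "phi v c \<rho> = d \<rho>"
      proof (cases "v \<in> \<rho>")
        case True
        then have "d \<rho> = 0" using d v2 unfolding chains_def by blast
        then show ?thesis using True by (simp add: phi_def)
      next
        case False
        have "insert v \<rho> - {v} = \<rho>" using False by auto
        then show ?thesis using False by (simp add: phi_def c_def psi_def mult.assoc[symmetric])
      qed
    qed
    ultimately show "d \<in> phi v ` pv v ` chains K (Ind V E) k" using cC by (metis image_eqI)
  qed
qed

lemma betti_step:
  fixes K :: "'k::field itself" and V :: "'a::linorder set"
  assumes fin: "finite V" and vV: "v \<in> V" and nvv: "\<not> E v v"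
  defines "V2 \<equiv> V - insert v {u. E v u \<or> E u v}"
  shows "reduced_betti K V (Ind V E) k \<le> reduced_betti K (V - {v}) (Ind (V - {v}) E) k
           + (if k = 0 then 0 else reduced_betti K V2 (Ind V2 E) (k - 1))"
proof -
  define D where "D = Ind V E"
  define V1 where "V1 = V - {v}"
  define D1 where "D1 = Ind V1 E"
  define D2 where "D2 = Ind V2 E"
  define C where "C j = (chains K D j :: ('a set \<Rightarrow> 'k) set)" for j
  define A where "A j = (chains K D1 j :: ('a set \<Rightarrow> 'k) set)" for j
  define Q where "Q j = (chains K D2 j :: ('a set \<Rightarrow> 'k) set)" for j
  define W where "W = (ind ` D :: ('a set \<Rightarrow> 'k) set)"
  have fW: "finite W" unfolding W_def D_def using finite_Ind[OF fin] by simp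
  have spW: "S \<subseteq> cs.span W" if "S \<subseteq> SP D" for S
    using fd[OF fin, of S E] that unfolding W_def D_def by simp
  have D1D: "D1 \<subseteq> D" unfolding D1_def D_def V1_def by (rule Ind_sub) auto
  have D2D: "D2 \<subseteq> D" unfolding D2_def D_def V2_def by (rule Ind_sub) auto
  have lbd: "Vector_Spaces.linear chain_scale chain_scale (bd V' \<Delta>' :: ('a set \<Rightarrow> 'k) \<Rightarrow> _)" for V' \<Delta>'
    by (rule linear_bd)
  have lpv: "Vector_Spaces.linear chain_scale chain_scale (pv v :: ('a set \<Rightarrow> 'k) \<Rightarrow> _)"
    by (rule linear_pv)
  have lphi: "Vector_Spaces.linear chain_scale chain_scale (phi v :: ('a set \<Rightarrow> 'k) \<Rightarrow> _)"
    by (rule linear_phi)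
  have sC: "cs.subspace (C j)" "cs.subspace (A j)" "cs.subspace (Q j)" for j
    unfolding C_def A_def Q_def by (rule subspace_chains)+
  have CSP: "C j \<subseteq> SP D" for j unfolding C_def by (rule chains_SP)
  have ASP: "A j \<subseteq> SP D" for j unfolding A_def using chains_SP SP_mono[OF D1D] by blast
  have QSP: "Q j \<subseteq> SP D" for j unfolding Q_def using chains_SP SP_mono[OF D2D] by blast
  have bdSP: "bd V' \<Delta>' ` S \<subseteq> SP \<Delta>'" for V' \<Delta>' S using bd_SP by blast
  have cyc: "cs.dim (cycles K V' \<Delta>' j) = cs.dim (chains K \<Delta>' j) - cs.dim (bd V' \<Delta>' ` chains K \<Delta>' j)"
    if "chains K \<Delta>' j \<subseteq> SP D" for V' \<Delta>' j
  proof -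
    have "cs.dim (chains K \<Delta>' j) = cs.dim {x \<in> chains K \<Delta>' j. bd V' \<Delta>' x = 0} + cs.dim (bd V' \<Delta>' ` chains K \<Delta>' j)"
      by (rule cs.rank_nullity_fd[OF lbd subspace_chains spW[OF that] fW])
    then show ?thesis unfolding cycles_def by simp
  qed
  have AC: "A j \<subseteq> C j" for j unfolding A_def C_def by (rule chains_mono[OF D1D])
  have pvC: "pv v ` C j \<subseteq> C j" for j unfolding C_def by (rule pv_chains)
  have s3: "cs.dim (C j) = cs.dim (A j) + cs.dim (pv v ` C j)" for j
  proof -
    have "cs.dim (C j) = cs.dim {x \<in> C j. pv v x = 0} + cs.dim (pv v ` C j)"
      by (rule cs.rank_nullity_fd[OF lpv sC(1) spW[OF CSP] fW])
    moreover have "{x \<in> C j. pv v x = 0} = A j"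
      unfolding A_def C_def D1_def D_def V1_def by (rule A_eq[symmetric])
    ultimately show ?thesis by simp
  qed
  have s4: "cs.dim (bd V1 D1 ` A j) + cs.dim (pv v ` bd V D ` pv v ` C j) \<le> cs.dim (bd V D ` C j)" for j
  proof -
    let ?S = "bd V D ` C j"
    have sS: "cs.subspace ?S" by (rule subspace_lin_image[OF lbd sC(1)])
    have SSP: "?S \<subseteq> SP D" by (rule bdSP)
    have rn: "cs.dim ?S = cs.dim {x \<in> ?S. pv v x = 0} + cs.dim (pv v ` ?S)"
      by (rule cs.rank_nullity_fd[OF lpv sS spW[OF SSP] fW])
    have X1: "bd V1 D1 ` A j \<subseteq> {x \<in> ?S. pv v x = 0}"
    proof
      fix y assume "y \<in> bd V1 D1 ` A j"
      then obtain a where a: "a \<in> A j" "y = bd V1 D1 a" by auto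
      have av: "a \<sigma> = 0" if "v \<in> \<sigma>" for \<sigma>
        using a(1) that unfolding A_def chains_def D1_def V1_def Ind_def by auto
      have e: "bd V D a = bd V1 D1 a"
        unfolding D_def D1_def V1_def by (rule bd_restrict[OF fin av])
      have "y \<in> ?S" using a e AC[of j] by (metis image_eqI subsetD)
      moreover have "pv v y = 0"
      proof
        fix \<sigma>
        have "y \<in> SP D1" using a(2) bd_SP by simp
        then show "pv v y \<sigma> = 0 \<sigma>" unfolding SP_def pv_def D1_def V1_def Ind_def by auto
      qed
      ultimately show "y \<in> {x \<in> ?S. pv v x = 0}" by simp
    qed
    have d1: "cs.dim (bd V1 D1 ` A j) \<le> cs.dim {x \<in> ?S. pv v x = 0}"
    proof (rule cs.dim_mono_fd[OF subset_trans[OF X1 cs.span_superset] _ fW])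
      show "{x \<in> ?S. pv v x = 0} \<subseteq> cs.span W" by (rule spW) (use SSP in auto)
    qed
    have X2: "pv v ` bd V D ` pv v ` C j \<subseteq> pv v ` ?S" using pvC by blast
    have d2: "cs.dim (pv v ` bd V D ` pv v ` C j) \<le> cs.dim (pv v ` ?S)"
    proof (rule cs.dim_mono_fd[OF subset_trans[OF X2 cs.span_superset] _ fW])
      show "pv v ` ?S \<subseteq> cs.span W" by (rule spW) (auto intro: pv_SP bd_SP)
    qed
    show ?thesis using rn d1 d2 by simp
  qed
  have s5: "cs.dim (pv v ` C j) = cs.dim (Q (j - 1)) \<and>
            cs.dim (pv v ` bd V D ` pv v ` C j) = cs.dim (bd V2 D2 ` Q (j - 1))" if j: "j \<ge> 1" for j
  proof -
    let ?R = "pv v ` C j"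
    have sR: "cs.subspace ?R" by (rule subspace_lin_image[OF lpv sC(1)])
    have RSP: "?R \<subseteq> SP D" using pvC CSP by blast
    have van: "x \<sigma> = 0" if "x \<in> pv v ` S" "v \<notin> \<sigma>" for x S \<sigma>
      using that unfolding pv_def by auto
    have m5: "phi v ` ?R = Q (j - 1)"
      unfolding C_def Q_def D_def D2_def V2_def by (rule M5[where V=V and v=v and E=E and k=j and K=K, OF fin vV nvv j])
    have e1: "cs.dim (phi v ` ?R) = cs.dim ?R"
    proof (rule cs.dim_inj_image_fd[OF lphi sR spW[OF RSP] fW])
      fix x assume "x \<in> ?R" "phi v x = 0"
      then show "x = 0" using phi_inj[of v x] van[of x "C j"] by blast
    qed
    let ?T = "pv v ` bd V D ` ?R"
    have sT: "cs.subspace ?T" by (intro subspace_lin_image[OF lpv] subspace_lin_image[OF lbd] sR)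
    have TSP: "?T \<subseteq> SP D" by (auto intro: pv_SP bd_SP)
    have e2: "cs.dim (phi v ` ?T) = cs.dim ?T"
    proof (rule cs.dim_inj_image_fd[OF lphi sT spW[OF TSP] fW])
      fix x assume "x \<in> ?T" "phi v x = 0"
      then show "x = 0" using phi_inj[of v x] van[of x "bd V D ` ?R"] by blast
    qed
    have "phi v ` ?T = uminus ` bd V2 D2 ` phi v ` ?R"
    proof -
      have "phi v ` ?T = (\<lambda>c. phi v (pv v (bd V D c))) ` ?R" by (simp add: image_image)
      also have "\<dots> = (\<lambda>c. - bd V2 D2 (phi v c)) ` ?R"
        unfolding D_def D2_def V2_def by (simp only: phi_bd[where V=V and v=v and E=E, OF fin vV nvv])
      also have "\<dots> = uminus ` bd V2 D2 ` phi v ` ?R" by (simp add: image_image)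
      finally show ?thesis .
    qed
    then have e3: "phi v ` ?T = uminus ` bd V2 D2 ` Q (j - 1)" using m5 by simp
    let ?U = "bd V2 D2 ` Q (j - 1)"
    have sU: "cs.subspace ?U" by (rule subspace_lin_image[OF lbd sC(3)])
    have USP: "?U \<subseteq> SP D" using bdSP[of V2 D2] SP_mono[OF D2D] by blast
    have e4: "cs.dim (uminus ` ?U) = cs.dim ?U"
      by (rule cs.dim_inj_image_fd[OF linear_uminus' sU spW[OF USP] fW]) simp
    show ?thesis using e1 e2 e3 e4 m5 by simp
  qed
  have s6: "cs.dim (pv v ` C 0) = 0"
    by (rule cs.dim_zero_set) (unfold C_def D_def, rule pv_C0[OF fin])
  have bD: "reduced_betti K V D k = (cs.dim (C k) - cs.dim (bd V D ` C k)) - cs.dim (bd V D ` C (Suc k))"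
    using cyc[of D k V] CSP[of k] unfolding reduced_betti_def boundaries_def C_def by simp
  have bD1: "reduced_betti K V1 D1 k = (cs.dim (A k) - cs.dim (bd V1 D1 ` A k)) - cs.dim (bd V1 D1 ` A (Suc k))"
    using cyc[of D1 k V1] ASP[of k] unfolding reduced_betti_def boundaries_def A_def by simp
  have bD2: "reduced_betti K V2 D2 j = (cs.dim (Q j) - cs.dim (bd V2 D2 ` Q j)) - cs.dim (bd V2 D2 ` Q (Suc j))" for j
    using cyc[of D2 j V2] QSP[of j] unfolding reduced_betti_def boundaries_def Q_def by simp
  show ?thesis
  proof (cases "k = 0")
    case True
    then show ?thesis using s3[of k] s4[of k] s4[of "Suc k"] s6
      unfolding D_def[symmetric] V1_def[symmetric] D1_def[symmetric] bD bD1 by simp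
  next
    case False
    then have k1: "k \<ge> 1" by simp
    have sk: "Suc (k - 1) = k" using k1 by simp
    show ?thesis using False s3[of k] s4[of k] s4[of "Suc k"] s5[OF k1] s5[of "Suc k"] bD2[of "k - 1"]
      unfolding D_def[symmetric] V1_def[symmetric] D1_def[symmetric] D2_def[symmetric] bD bD1 sk by (simp; arith)
  qed
qed

lemma btilde_step:
  fixes K :: "'k::field itself" and V :: "'a::linorder set"
  assumes fin: "finite V" and vV: "v \<in> V" and nvv: "\<not> E v v"
  shows "btilde K V E \<le> btilde K (V - {v}) E + btilde K (V - insert v {u. E v u \<or> E u v}) E"
proof -
  define V2 where "V2 = V - insert v {u. E v u \<or> E u v}"
  define g where "g k = (if k = 0 then 0 else reduced_betti K V2 (Ind V2 E) (k - 1))" for k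
  obtain m where m: "card V = Suc m" using vV fin by (metis card_Suc_Diff1)
  have "btilde K V E \<le> (\<Sum>k\<le>card V. reduced_betti K (V - {v}) (Ind (V - {v}) E) k + g k)"
    unfolding btilde_def g_def V2_def
    by (rule sum_mono) (rule betti_step[where V=V and v=v and E=E and K=K, OF fin vV nvv])
  also have "\<dots> = (\<Sum>k\<le>card V. reduced_betti K (V - {v}) (Ind (V - {v}) E) k) + (\<Sum>k\<le>card V. g k)"
    by (rule sum.distrib)
  also have "(\<Sum>k\<le>card V. reduced_betti K (V - {v}) (Ind (V - {v}) E) k) = btilde K (V - {v}) E"
    by (rule btilde_ext) (use fin in \<open>auto intro: card_mono\<close>)
  also have "(\<Sum>k\<le>card V. g k) = (\<Sum>i\<le>m. reduced_betti K V2 (Ind V2 E) i)"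
    unfolding m sum.atMost_Suc_shift by (simp add: g_def)
  also have "\<dots> = btilde K V2 E"
  proof (rule btilde_ext)
    show "finite V2" using fin unfolding V2_def by auto
    have "V2 \<subseteq> V - {v}" unfolding V2_def by auto
    then have "card V2 \<le> card (V - {v})" using fin by (intro card_mono) auto
    then show "card V2 \<le> m" using m vV fin by simp
  qed
  finally show ?thesis unfolding V2_def .
qed

lemma btilde_cong:
  assumes "\<And>x y. x \<in> V \<Longrightarrow> y \<in> V \<Longrightarrow> E x y = E' x y"
  shows "btilde K V E = btilde K V E'"
proof -
  have "Ind V E = Ind V E'" unfolding Ind_def using assms by blast
  then show ?thesis unfolding btilde_def by simp
qed

definition E0 :: "nat \<Rightarrow> nat \<Rightarrow> bool" where
  "E0 i j = (i \<noteq> j \<and> i \<le> j + 2 \<and> j \<le> i + 2)"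

fun gg :: "nat \<Rightarrow> nat" where
  "gg 0 = 1"
| "gg (Suc 0) = 0"
| "gg (Suc (Suc 0)) = 1"
| "gg (Suc (Suc (Suc n))) = gg (n - 1) + gg (n - 2)"

lemma gg_rec: "m \<ge> 3 \<Longrightarrow> gg m = gg (m - 4) + gg (m - 5)"
  by (cases m rule: gg.cases) (auto simp: diff_diff_add numeral_eq_Suc)

lemma path_bound:
  fixes K :: "'k::field itself"
  shows "btilde K {a..<a+m} E0 \<le> gg m"
proof (induction m arbitrary: a rule: less_induct)
  case (less m)
  show ?case
  proof (cases "m \<le> 1")
    case True
    then consider "m = 0" | "m = 1" by linarith
    then show ?thesis
    proof cases
      case 1 then show ?thesis using btilde_empty[of K E0] by simp
    next
      case 2
      have "btilde K {a..<a+m} E0 = 0"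
        by (rule btilde_cone[of _ a]) (use 2 in \<open>auto simp: E0_def\<close>)
      then show ?thesis by simp
    qed
  next
    case False
    then have m2: "m \<ge> 2" by simp
    define V where "V = {a..<a+m}"
    have fV: "finite V" unfolding V_def by simp
    have st1: "btilde K V E0 \<le> btilde K (V - {a+1}) E0 + btilde K (V - insert (a+1) {u. E0 (a+1) u \<or> E0 u (a+1)}) E0"
      by (rule btilde_step) (use m2 in \<open>auto simp: V_def E0_def\<close>)
    have e1: "V - insert (a+1) {u. E0 (a+1) u \<or> E0 u (a+1)} = {a+4..<(a+4)+(m-4)}"
      unfolding V_def E0_def by auto
    have b1: "btilde K (V - insert (a+1) {u. E0 (a+1) u \<or> E0 u (a+1)}) E0 \<le> gg (m - 4)"
      unfolding e1 by (rule less.IH) (use m2 in auto)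
    have b2: "btilde K (V - {a+1}) E0 \<le> (if m = 2 then 0 else gg (m - 5))"
    proof (cases "m = 2")
      case True
      have "V - {a+1} = {a}" unfolding V_def using True by auto
      then have "btilde K (V - {a+1}) E0 = 0"
        using btilde_cone[of "{a}" a E0 K] by (simp add: E0_def)
      then show ?thesis by simp
    next
      case False
      then have m3: "m \<ge> 3" using m2 by simp
      define V' where "V' = V - {a+1}"
      have st2: "btilde K V' E0 \<le> btilde K (V' - {a+2}) E0 + btilde K (V' - insert (a+2) {u. E0 (a+2) u \<or> E0 u (a+2)}) E0"
        by (rule btilde_step) (use m3 in \<open>auto simp: V'_def V_def E0_def\<close>)
      have c0: "btilde K (V' - {a+2}) E0 = 0"
        by (rule btilde_cone[of _ a]) (use m3 in \<open>auto simp: V'_def V_def E0_def\<close>)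
      have e2: "V' - insert (a+2) {u. E0 (a+2) u \<or> E0 u (a+2)} = {a+5..<(a+5)+(m-5)}"
        unfolding V'_def V_def E0_def by auto
      have b3: "btilde K (V' - insert (a+2) {u. E0 (a+2) u \<or> E0 u (a+2)}) E0 \<le> gg (m - 5)"
        unfolding e2 by (rule less.IH) (use m2 in auto)
      show ?thesis using st2 c0 b3 False unfolding V'_def by simp
    qed
    have "gg m = gg (m - 4) + (if m = 2 then 0 else gg (m - 5))"
    proof (cases "m = 2")
      case True then show ?thesis by (simp add: numeral_eq_Suc)
    next
      case False then show ?thesis using gg_rec[of m] m2 by simp
    qed
    then show ?thesis using st1 b1 b2 unfolding V_def by linarith
  qed
qed

lemma gg_vals: "gg 4 = 2" "gg 5 = 1" "gg 6 = 1" "gg 7 = 3" "gg 8 = 4"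
  by (simp_all add: numeral_eq_Suc)

lemma two_powr_7_4: "(3::real) \<le> 2 powr (7/4)"
proof (rule ccontr)
  assume "\<not> (3::real) \<le> 2 powr (7/4)"
  then have lt: "2 powr (7/4) < (3::real)" by simp
  have pos: "(0::real) < 2 powr (7/4)" by simp
  have "(2 powr (7/4::real)) ^ 4 = (2 powr (7/4::real)) powr (real 4)"
    using powr_realpow[OF pos, of 4] by simp
  also have "\<dots> = 2 powr 7" by (simp add: powr_powr)
  also have "\<dots> = 2 ^ 7" using powr_realpow[of 2 7] by simp
  finally have e: "(2 powr (7/4::real)) ^ 4 = 128" by simp
  have "(2 powr (7/4::real)) ^ 4 < 3 ^ 4"
    by (rule power_strict_mono[OF lt]) (use pos in auto)
  then show False using e by simp
qed

lemma gg_bound: "m \<ge> 4 \<Longrightarrow> real (gg m) \<le> 2 powr (real m / 4)"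
proof (induction m rule: less_induct)
  case (less m)
  show ?case
  proof (cases "m \<le> 8")
    case True
    then consider "m = 4" | "m = 5" | "m = 6" | "m = 7" | "m = 8" using less.prems by linarith
    then show ?thesis
    proof cases
      case 1 then show ?thesis by (simp add: gg_vals)
    next
      case 2 then show ?thesis by (simp add: gg_vals ge_one_powr_ge_zero)
    next
      case 3 then show ?thesis by (simp add: gg_vals ge_one_powr_ge_zero)
    next
      case 4 then show ?thesis using two_powr_7_4 by (simp add: gg_vals)
    next
      case 5
      have "(2::real) powr (8 / 4) = 2 powr (real 2)" by simp
      also have "\<dots> = 4" by (subst powr_realpow) auto
      finally show ?thesis using 5 by (simp add: gg_vals)
    qed
  next
    case False
    then have m9: "m \<ge> 9" by simp
    have r: "gg m = gg (m - 4) + gg (m - 5)" using gg_rec[of m] m9 by simp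
    have i1: "real (gg (m - 4)) \<le> 2 powr (real (m - 4) / 4)" using less.IH[of "m - 4"] m9 by simp
    have i2: "real (gg (m - 5)) \<le> 2 powr (real (m - 5) / 4)" using less.IH[of "m - 5"] m9 by simp
    have pm: "2 powr (real (m - 5) / 4) \<le> (2::real) powr (real (m - 4) / 4)"
      by (rule powr_mono) (use m9 in auto)
    have rr: "real (gg m) = real (gg (m - 4)) + real (gg (m - 5))" using r by simp
    have "real (gg m) \<le> 2 * 2 powr (real (m - 4) / 4)" using rr i1 i2 pm by linarith
    also have "\<dots> = 2 powr (1 + real (m - 4) / 4)" by (simp add: powr_add)
    also have "1 + real (m - 4) / 4 = real m / 4" using m9 by (simp add: of_nat_diff field_simps)
    finally show ?thesis .
  qed
qed

lemma TC_char:
  assumes n: "n \<ge> 5" and "1 \<le> i" "i \<le> n" "1 \<le> j" "j \<le> n"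
  shows "TC_adj n i j \<longleftrightarrow> i \<noteq> j \<and> (i \<le> j + 2 \<and> j \<le> i + 2 \<or> i + n \<le> j + 2 \<or> j + n \<le> i + 2)"
proof -
  have m: "(int i - int j) mod int n = (if int j \<le> int i then int i - int j else int i - int j + int n)"
  proof (cases "int j \<le> int i")
    case True then show ?thesis using assms by (simp add: mod_pos_pos_trivial)
  next
    case False
    have "(int i - int j + int n) mod int n = (int i - int j) mod int n" by (rule mod_add_self2)
    moreover have "(int i - int j + int n) mod int n = int i - int j + int n"
      using False assms by (intro mod_pos_pos_trivial) auto
    ultimately show ?thesis using False by simp
  qed
  show ?thesis unfolding TC_adj_def m using assms by auto
qed

lemma btilde_TC_E0:
  assumes n: "n \<ge> 5" and V: "V \<subseteq> {1..n}"
    and far: "\<And>x y. x \<in> V \<Longrightarrow> y \<in> V \<Longrightarrow> x + n > y + 2"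
  shows "btilde K V (TC_adj n) = btilde K V E0"
proof (rule btilde_cong)
  fix x y assume xy: "x \<in> V" "y \<in> V"
  then have b: "1 \<le> x" "x \<le> n" "1 \<le> y" "y \<le> n" using V by auto
  show "TC_adj n x y = E0 x y"
    using TC_char[OF n b] far[OF xy] far[of y x] xy unfolding E0_def by auto
qed

theorem lemmaA21:
  fixes n :: nat
  assumes "n \<ge> 9"
  shows "real (btilde TYPE('k::field) {1..n} (TC_adj n))
           \<le> 2 powr (real n / 4) * (2 powr (-1/2) + 2 powr (-1/4))"
proof -
  let ?K = "TYPE('k::field)"
  have n5: "n \<ge> 5" using assms by simp
  have adj: "TC_adj n i j \<longleftrightarrow> i \<noteq> j \<and> (i \<le> j + 2 \<and> j \<le> i + 2 \<or> i + n \<le> j + 2 \<or> j + n \<le> i + 2)"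
    if "i \<in> {1..n}" "j \<in> {1..n}" for i j
    using TC_char[OF n5, of i j] that by auto
  define V1 where "V1 = {1..n} - {n}"
  have st1: "btilde ?K {1..n} (TC_adj n) \<le> btilde ?K V1 (TC_adj n)
      + btilde ?K ({1..n} - insert n {u. TC_adj n n u \<or> TC_adj n u n}) (TC_adj n)"
    unfolding V1_def by (rule btilde_step) (use assms in \<open>auto simp: TC_adj_def\<close>)
  have e1: "{1..n} - insert n {u. TC_adj n n u \<or> TC_adj n u n} = {3..<3+(n-5)}"
  proof (rule set_eqI)
    fix x show "x \<in> {1..n} - insert n {u. TC_adj n n u \<or> TC_adj n u n} \<longleftrightarrow> x \<in> {3..<3+(n-5)}"
    proof (cases "x \<in> {1..n}")
      case True
      then show ?thesis using adj[OF True, of n] adj[of n x] True assms by auto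
    qed (use assms in auto)
  qed
  have st2: "btilde ?K V1 (TC_adj n) \<le> btilde ?K (V1 - {1}) (TC_adj n)
      + btilde ?K (V1 - insert 1 {u. TC_adj n 1 u \<or> TC_adj n u 1}) (TC_adj n)"
    by (rule btilde_step) (use assms in \<open>auto simp: TC_adj_def V1_def\<close>)
  have e2: "V1 - {1} = {2..<2+(n-2)}" unfolding V1_def using assms by auto
  have e3: "V1 - insert 1 {u. TC_adj n 1 u \<or> TC_adj n u 1} = {4..<4+(n-5)}"
  proof (rule set_eqI)
    fix x show "x \<in> V1 - insert 1 {u. TC_adj n 1 u \<or> TC_adj n u 1} \<longleftrightarrow> x \<in> {4..<4+(n-5)}"
    proof (cases "x \<in> {1..n}")
      case True
      have o: "1 \<in> {1..n}" using assms by auto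
      show ?thesis using adj[OF True o] adj[OF o True] True assms unfolding V1_def by auto
    qed (use assms in \<open>auto simp: V1_def\<close>)
  qed
  have b1: "btilde ?K {3..<3+(n-5)} (TC_adj n) \<le> gg (n - 5)"
  proof -
    have "btilde ?K {3..<3+(n-5)} (TC_adj n) = btilde ?K {3..<3+(n-5)} E0"
      by (rule btilde_TC_E0[OF n5]) (use assms in auto)
    then show ?thesis using path_bound[of ?K 3 "n - 5"] by simp
  qed
  have b2: "btilde ?K {2..<2+(n-2)} (TC_adj n) \<le> gg (n - 2)"
  proof -
    have "btilde ?K {2..<2+(n-2)} (TC_adj n) = btilde ?K {2..<2+(n-2)} E0"
      by (rule btilde_TC_E0[OF n5]) (use assms in auto)
    then show ?thesis using path_bound[of ?K 2 "n - 2"] by simp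
  qed
  have b3: "btilde ?K {4..<4+(n-5)} (TC_adj n) \<le> gg (n - 5)"
  proof -
    have "btilde ?K {4..<4+(n-5)} (TC_adj n) = btilde ?K {4..<4+(n-5)} E0"
      by (rule btilde_TC_E0[OF n5]) (use assms in auto)
    then show ?thesis using path_bound[of ?K 4 "n - 5"] by simp
  qed
  have tot: "btilde ?K {1..n} (TC_adj n) \<le> gg (n - 2) + 2 * gg (n - 5)"
    using st1 st2 e1 e2 e3 b1 b2 b3 by simp
  have g1: "real (gg (n - 2)) \<le> 2 powr (real (n - 2) / 4)" by (rule gg_bound) (use assms in simp)
  have g2: "real (gg (n - 5)) \<le> 2 powr (real (n - 5) / 4)" by (rule gg_bound) (use assms in simp)
  have p1: "(2::real) powr (real (n - 2) / 4) = 2 powr (real n / 4) * 2 powr (-1/2)"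
  proof -
    have h: "real (n - 2) / 4 = real n / 4 + (-1/2)" using assms by (simp add: of_nat_diff field_simps)
    show ?thesis unfolding h by (rule powr_add)
  qed
  have p2: "2 * (2::real) powr (real (n - 5) / 4) = 2 powr (real n / 4) * 2 powr (-1/4)"
  proof -
    have h: "1 + real (n - 5) / 4 = real n / 4 + (-1/4)" using assms by (simp add: of_nat_diff field_simps)
    have pa: "(2::real) powr (1 + real (n - 5) / 4) = 2 powr 1 * 2 powr (real (n - 5) / 4)"
      by (rule powr_add)
    have "2 * (2::real) powr (real (n - 5) / 4) = 2 powr (1 + real (n - 5) / 4)"
      unfolding pa by simp
    also have "\<dots> = 2 powr (real n / 4 + (-1/4))" unfolding h ..
    also have "\<dots> = 2 powr (real n / 4) * 2 powr (-1/4)" by (rule powr_add)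
    finally show ?thesis .
  qed
  have "real (btilde ?K {1..n} (TC_adj n)) \<le> real (gg (n - 2) + 2 * gg (n - 5))"
    using tot by (simp only: of_nat_le_iff)
  also have "\<dots> = real (gg (n - 2)) + 2 * real (gg (n - 5))" by simp
  also have "\<dots> \<le> 2 powr (real (n - 2) / 4) + 2 * 2 powr (real (n - 5) / 4)" using g1 g2 by simp
  also have "\<dots> = 2 powr (real n / 4) * (2 powr (-1/2) + 2 powr (-1/4))"
    using p1 p2 by (simp add: distrib_left)
  finally show ?thesis .
qed

end
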